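(* Consider an $N$-player quadratic game with costs $J_m(x)=\frac12 x^\top Q_m x+b_m^\top x+p_m$, where $Q_m\in\mathbb{R}^{N\times N}$ is symmetric, $b_m\in\mathbb{R}^N$, $p_m\in\mathbb{R}$. Let players $1,\dots,n$ be deceptive, each $i\in[n]$ deceiving a nonempty set $\mathcal{D}_i\subset[N]\setminus\{i\}$, and let $\delta=(\delta_1,\dots,\delta_n)\in\mathbb{R}^n$ be fixed. Let $\bar\omega_1,\dots,\bar\omega_N$ be pairwise distinct positive rationals, $T>0$ a common period of all $\sin(\bar\omega_m\tau)$, and $\tilde\mu$ defined by $\tilde\mu_m(\tau)=\sin(\bar\omega_m\tau)+\delta_m\sum_{j\in\mathcal{D}_m}\sin(\bar\omega_j\tau)$ for $m\in[n]$ and $\tilde\mu_m(\tau)=\sin(\bar\omega_m\tau)$ for $m\notin[n]$. Then for every $a>0$, $k>0$, $u\in\mathbb{R}^N$ and $m\in[N]$, $$\frac{1}{T}\int_0^T -\frac{2k}{a}J_m\big(u+a\tilde\mu(\tau)\big)\sin(\bar\omega_m\tau)\,d\tau=-k\big(\mathcal{Q}_\delta u+\mathcal{B}_\delta\big)_m$$ exactly (with no remainder term), where $\mathcal{Q}_\delta\in\mathbb{R}^{N\times N}$ has $m$-th row $(Q_m)_{m:}+\sum_{j\in[n]:\,m\in\mathcal{D}_j}\delta_j (Q_m)_{j:}$ and $\mathcal{B}_\delta\in\mathbb{R}^N$ has $m$-th entry $(b_m)_m+\sum_{j\in[n]:\,m\in\mathcal{D}_j}\delta_j (b_m)_j$.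
   Context: For a matrix $Q$, $(Q)_{j:}$ denotes its $j$-th row; for a vector $b$, $(b)_j$ its $j$-th entry. *)

theory Defs
  imports "HOL-Analysis.Analysis"
begin

text \<open>Players are indexed by 1..N; the deceptive players are 1..n.
  Vectors in R^N are functions nat => real (only indices 1..N matter);
  the matrix Q_m is Q m :: nat => nat => real, the vector b_m is b m.\<close>

definition quad_cost ::
  "nat \<Rightarrow> (nat \<Rightarrow> nat \<Rightarrow> nat \<Rightarrow> real) \<Rightarrow> (nat \<Rightarrow> nat \<Rightarrow> real) \<Rightarrow> (nat \<Rightarrow> real)
    \<Rightarrow> nat \<Rightarrow> (nat \<Rightarrow> real) \<Rightarrow> real" where
  "quad_cost N Q b p m x =
     1/2 * (\<Sum>i=1..N. \<Sum>j=1..N. x i * Q m i j * x j) + (\<Sum>i=1..N. b m i * x i) + p m"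

definition mu_tilde ::
  "nat \<Rightarrow> (nat \<Rightarrow> nat set) \<Rightarrow> (nat \<Rightarrow> real) \<Rightarrow> (nat \<Rightarrow> real) \<Rightarrow> nat \<Rightarrow> real \<Rightarrow> real" where
  "mu_tilde n D \<delta> \<omega> m \<tau> =
     (if m \<in> {1..n} then sin (\<omega> m * \<tau>) + \<delta> m * (\<Sum>j\<in>D m. sin (\<omega> j * \<tau>))
      else sin (\<omega> m * \<tau>))"

definition Q_delta ::
  "nat \<Rightarrow> (nat \<Rightarrow> nat set) \<Rightarrow> (nat \<Rightarrow> real) \<Rightarrow> (nat \<Rightarrow> nat \<Rightarrow> nat \<Rightarrow> real) \<Rightarrow> nat \<Rightarrow> nat \<Rightarrow> real" where
  "Q_delta n D \<delta> Q m l = Q m m l + (\<Sum>j\<in>{j\<in>{1..n}. m \<in> D j}. \<delta> j * Q m j l)"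

definition B_delta ::
  "nat \<Rightarrow> (nat \<Rightarrow> nat set) \<Rightarrow> (nat \<Rightarrow> real) \<Rightarrow> (nat \<Rightarrow> nat \<Rightarrow> real) \<Rightarrow> nat \<Rightarrow> real" where
  "B_delta n D \<delta> b m = b m m + (\<Sum>j\<in>{j\<in>{1..n}. m \<in> D j}. \<delta> j * b m j)"

end

theory Submission
  imports Defs
begin



lemma int_sin:
  fixes c T :: real
  assumes "T \<ge> 0" "cos (c*T) = 1"
  shows "((\<lambda>\<tau>. sin (c*\<tau>)) has_integral 0) {0..T}"
proof (cases "c = 0")
  case True then show ?thesis by simp
next
  case False
  have "((\<lambda>\<tau>. sin (c*\<tau>)) has_integral ((\<lambda>\<tau>. - cos (c*\<tau>) / c) T - (\<lambda>\<tau>. - cos (c*\<tau>) / c) 0)) {0..T}"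
  proof (rule fundamental_theorem_of_calculus[OF assms(1)])
    fix x assume "x \<in> {0..T}"
    have "((\<lambda>\<tau>. - cos (c*\<tau>) / c) has_real_derivative sin (c*x)) (at x within {0..T})"
      using False by (auto intro!: derivative_eq_intros)
    then show "((\<lambda>\<tau>. - cos (c*\<tau>) / c) has_vector_derivative sin (c*x)) (at x within {0..T})"
      by (simp add: has_real_derivative_iff_has_vector_derivative)
  qed
  then show ?thesis using assms(2) by simp
qed

lemma int_cos:
  fixes c T :: real
  assumes "T \<ge> 0" "sin (c*T) = 0"
  shows "((\<lambda>\<tau>. cos (c*\<tau>)) has_integral (if c = 0 then T else 0)) {0..T}"
proof (cases "c = 0")
  case True then show ?thesis using has_integral_const_real[of "1::real" 0 T] assms(1) by simp
next
  case False
  have "((\<lambda>\<tau>. cos (c*\<tau>)) has_integral ((\<lambda>\<tau>. sin (c*\<tau>) / c) T - (\<lambda>\<tau>. sin (c*\<tau>) / c) 0)) {0..T}"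
  proof (rule fundamental_theorem_of_calculus[OF assms(1)])
    fix x assume "x \<in> {0..T}"
    have "((\<lambda>\<tau>. sin (c*\<tau>) / c) has_real_derivative cos (c*x)) (at x within {0..T})"
      using False by (auto intro!: derivative_eq_intros)
    then show "((\<lambda>\<tau>. sin (c*\<tau>) / c) has_vector_derivative cos (c*x)) (at x within {0..T})"
      by (simp add: has_real_derivative_iff_has_vector_derivative)
  qed
  then show ?thesis using assms(2) False by simp
qed

definition good :: "real \<Rightarrow> real \<Rightarrow> bool" where
  "good T c \<longleftrightarrow> cos (c*T) = 1 \<and> sin (c*T) = 0"

lemma good_add: "good T x \<Longrightarrow> good T y \<Longrightarrow> good T (x+y)"
  by (simp add: good_def distrib_right cos_add sin_add)
lemma good_diff: "good T x \<Longrightarrow> good T y \<Longrightarrow> good T (x-y)"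
  by (simp add: good_def left_diff_distrib cos_diff sin_diff)

lemma int_sin2:
  fixes x y T :: real
  assumes "T \<ge> 0" "good T x" "good T y"
  shows "((\<lambda>\<tau>. sin (x*\<tau>) * sin (y*\<tau>)) has_integral (if x = y then T/2 else 0) - (if x + y = 0 then T/2 else 0)) {0..T}"
proof -
  have e: "\<And>\<tau>. sin (x*\<tau>) * sin (y*\<tau>) = (1/2) * cos ((x-y)*\<tau>) - (1/2) * cos ((x+y)*\<tau>)"
  proof -
    fix \<tau>
    have "(x-y)*\<tau> = x*\<tau> - y*\<tau>" "(x+y)*\<tau> = x*\<tau> + y*\<tau>" by (simp_all add: algebra_simps)
    then show "sin (x*\<tau>) * sin (y*\<tau>) = (1/2) * cos ((x-y)*\<tau>) - (1/2) * cos ((x+y)*\<tau>)"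
      by (simp only: sin_times_sin) simp
  qed
  have a: "((\<lambda>\<tau>. cos ((x-y)*\<tau>)) has_integral (if x - y = 0 then T else 0)) {0..T}"
    using int_cos[OF assms(1)] good_diff[OF assms(2,3)] good_def by blast
  have b: "((\<lambda>\<tau>. cos ((x+y)*\<tau>)) has_integral (if x + y = 0 then T else 0)) {0..T}"
    using int_cos[OF assms(1)] good_add[OF assms(2,3)] good_def by blast
  have "((\<lambda>\<tau>. (1/2) * cos ((x-y)*\<tau>) - (1/2) * cos ((x+y)*\<tau>)) has_integral
     (1/2) * (if x - y = 0 then T else 0) - (1/2) * (if x + y = 0 then T else 0)) {0..T}"
    by (intro has_integral_diff has_integral_mult_right a b)
  then show ?thesis unfolding e by (simp split: if_splits)
qed

lemma int_sin3:
  fixes x y z T :: real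
  assumes "T \<ge> 0" "good T x" "good T y" "good T z"
  shows "((\<lambda>\<tau>. sin (x*\<tau>) * sin (y*\<tau>) * sin (z*\<tau>)) has_integral 0) {0..T}"
proof -
  have e: "\<And>\<tau>. sin (x*\<tau>) * sin (y*\<tau>) * sin (z*\<tau>) =
     (1/4) * sin ((x-y+z)*\<tau>) - (1/4) * sin ((x-y-z)*\<tau>) - ((1/4) * sin ((x+y+z)*\<tau>) - (1/4) * sin ((x+y-z)*\<tau>))"
  proof -
    fix \<tau>
    have "(x-y+z)*\<tau> = (x*\<tau> - y*\<tau>) + z*\<tau>" "(x-y-z)*\<tau> = (x*\<tau> - y*\<tau>) - z*\<tau>"
      "(x+y+z)*\<tau> = (x*\<tau> + y*\<tau>) + z*\<tau>" "(x+y-z)*\<tau> = (x*\<tau> + y*\<tau>) - z*\<tau>"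
      by (simp_all add: algebra_simps)
    moreover have "sin (x*\<tau>) * sin (y*\<tau>) * sin (z*\<tau>) =
       (cos (x*\<tau> - y*\<tau>) * sin (z*\<tau>) - cos (x*\<tau> + y*\<tau>) * sin (z*\<tau>)) / 2"
      by (simp add: sin_times_sin left_diff_distrib)
    ultimately show "sin (x*\<tau>) * sin (y*\<tau>) * sin (z*\<tau>) =
     (1/4) * sin ((x-y+z)*\<tau>) - (1/4) * sin ((x-y-z)*\<tau>) - ((1/4) * sin ((x+y+z)*\<tau>) - (1/4) * sin ((x+y-z)*\<tau>))"
      by (simp only: cos_times_sin) (simp add: diff_divide_distrib)
  qed
  have g: "good T (x-y+z)" "good T (x-y-z)" "good T (x+y+z)" "good T (x+y-z)"
    using assms good_add good_diff by auto
  have i: "\<And>c. good T c \<Longrightarrow> ((\<lambda>\<tau>. (1/4) * sin (c*\<tau>)) has_integral (1/4) * 0) {0..T}"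
    by (intro has_integral_mult_right int_sin assms(1)) (simp add: good_def)
  show ?thesis unfolding e
    using has_integral_diff[OF has_integral_diff[OF i[OF g(1)] i[OF g(2)]] has_integral_diff[OF i[OF g(3)] i[OF g(4)]]]
    by simp
qed


lemma quad_expand:
  fixes A :: "nat \<Rightarrow> nat \<Rightarrow> real" and u v :: "nat \<Rightarrow> real"
  assumes sym: "\<forall>i\<in>{1..N}. \<forall>j\<in>{1..N}. A i j = A j i"
  shows "(\<Sum>i=1..N. \<Sum>j=1..N. (u i + a * v i) * A i j * (u j + a * v j)) =
     (\<Sum>i=1..N. \<Sum>j=1..N. u i * A i j * u j) + 2*a*(\<Sum>i=1..N. (\<Sum>j=1..N. A i j * u j) * v i)
     + a^2 * (\<Sum>i=1..N. \<Sum>j=1..N. v i * A i j * v j)"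
proof -
  have e: "(u i + a * v i) * A i j * (u j + a * v j) = u i * A i j * u j + a * (u i * A i j * v j) + a * (v i * A i j * u j) + a^2 * (v i * A i j * v j)" for i j
    by (simp add: algebra_simps power2_eq_square)
  have sw: "(\<Sum>i=1..N. \<Sum>j=1..N. u i * A i j * v j) = (\<Sum>i=1..N. \<Sum>j=1..N. v i * A i j * u j)"
  proof -
    have "(\<Sum>i=1..N. \<Sum>j=1..N. u i * A i j * v j) = (\<Sum>j=1..N. \<Sum>i=1..N. u i * A i j * v j)"
      by (rule sum.swap)
    also have "\<dots> = (\<Sum>j=1..N. \<Sum>i=1..N. v j * A j i * u i)"
      using sym by (intro sum.cong refl) (auto simp: mult_ac)
    finally show ?thesis .
  qed
  have r: "(\<Sum>i=1..N. (\<Sum>j=1..N. A i j * u j) * v i) = (\<Sum>i=1..N. \<Sum>j=1..N. v i * A i j * u j)"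
    by (simp add: sum_distrib_right sum_distrib_left mult_ac)
  show ?thesis
    unfolding e sum.distrib sum_distrib_left[symmetric] sw r by simp
qed
theorem mainTheorem2:
  fixes N n :: nat
    and Q :: "nat \<Rightarrow> nat \<Rightarrow> nat \<Rightarrow> real"
    and b :: "nat \<Rightarrow> nat \<Rightarrow> real"
    and p :: "nat \<Rightarrow> real"
    and D :: "nat \<Rightarrow> nat set"
    and \<delta> \<omega> :: "nat \<Rightarrow> real"
    and T a k :: real
    and u :: "nat \<Rightarrow> real"
    and m :: nat
  assumes Qsym: "\<forall>m\<in>{1..N}. \<forall>i\<in>{1..N}. \<forall>j\<in>{1..N}. Q m i j = Q m j i"
    and nN: "n \<le> N"
    and D_sub: "\<forall>i\<in>{1..n}. D i \<subseteq> {1..N} - {i}"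
    and D_ne: "\<forall>i\<in>{1..n}. D i \<noteq> {}"
    and \<omega>_rat: "\<forall>m\<in>{1..N}. \<omega> m \<in> \<rat>"
    and \<omega>_pos: "\<forall>m\<in>{1..N}. \<omega> m > 0"
    and \<omega>_dist: "\<forall>i\<in>{1..N}. \<forall>j\<in>{1..N}. i \<noteq> j \<longrightarrow> \<omega> i \<noteq> \<omega> j"
    and T_pos: "T > 0"
    and T_period: "\<forall>m\<in>{1..N}. \<forall>\<tau>. sin (\<omega> m * (\<tau> + T)) = sin (\<omega> m * \<tau>)"
    and a_pos: "a > 0" and k_pos: "k > 0"
    and m_in: "m \<in> {1..N}"
  shows "1 / T * integral {0..T}
           (\<lambda>\<tau>. - (2 * k / a)
                  * quad_cost N Q b p m (\<lambda>i. u i + a * mu_tilde n D \<delta> \<omega> i \<tau>)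
                  * sin (\<omega> m * \<tau>))
         = - k * ((\<Sum>l=1..N. Q_delta n D \<delta> Q m l * u l) + B_delta n D \<delta> b m)"
  proof -
  define s where "s j \<tau> = sin (\<omega> j * \<tau>)" for j \<tau>
  define C where "C i j = (if i = j then 1 else 0) + (if i \<in> {1..n} \<and> j \<in> D i then \<delta> i else 0)" for i j :: nat
  define g where "g i = (\<Sum>j=1..N. Q m i j * u j) + b m i" for i
  define J0 where "J0 = quad_cost N Q b p m u"
  have good: "good T (\<omega> i)" if "i \<in> {1..N}" for i
  proof -
    have w: "\<omega> i > 0" using \<omega>_pos that by auto
    have P: "\<forall>\<tau>. sin (\<omega> i * (\<tau> + T)) = sin (\<omega> i * \<tau>)" using T_period that by auto
    have "sin (\<omega> i * T) = 0" using P[rule_format, of 0] by simp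
    moreover have "cos (\<omega> i * T) = 1"
    proof -
      have "sin (\<omega> i * (pi/(2*\<omega> i) + T)) = sin (\<omega> i * (pi/(2*\<omega> i)))" using P by blast
      moreover have "\<omega> i * (pi/(2*\<omega> i) + T) = pi/2 + \<omega> i * T" "\<omega> i * (pi/(2*\<omega> i)) = pi/2"
        using w by (simp_all add: field_simps)
      ultimately show ?thesis using w by (simp add: sin_add)
    qed
    ultimately show ?thesis by (simp add: good_def)
  qed
  have I2: "((\<lambda>\<tau>. s j \<tau> * s m \<tau>) has_integral (if j = m then T/2 else 0)) {0..T}" if "j \<in> {1..N}" for j
  proof -
    have "((\<lambda>\<tau>. s j \<tau> * s m \<tau>) has_integral (if \<omega> j = \<omega> m then T/2 else 0) - (if \<omega> j + \<omega> m = 0 then T/2 else 0)) {0..T}"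
      unfolding s_def using int_sin2[OF _ good[OF that] good[OF m_in]] T_pos by simp
    moreover have "\<omega> j > 0" "\<omega> m > 0" using \<omega>_pos that m_in by auto
    moreover have "(\<omega> j = \<omega> m) = (j = m)" using \<omega>_dist that m_in by (metis atLeastAtMost_iff)
    ultimately show ?thesis by simp
  qed
  have I3: "((\<lambda>\<tau>. s p \<tau> * s q \<tau> * s m \<tau>) has_integral 0) {0..T}" if "p \<in> {1..N}" "q \<in> {1..N}" for p q
    unfolding s_def using int_sin3[OF _ good[OF that(1)] good[OF that(2)] good[OF m_in]] T_pos by simp
  have I1: "((\<lambda>\<tau>. s m \<tau>) has_integral 0) {0..T}"
    unfolding s_def using int_sin good[OF m_in] T_pos by (simp add: good_def)
  have mu: "mu_tilde n D \<delta> \<omega> i \<tau> = (\<Sum>j=1..N. C i j * s j \<tau>)" if "i \<in> {1..N}" for i \<tau>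
  proof -
    have "(\<Sum>j=1..N. C i j * s j \<tau>) = (\<Sum>j=1..N. (if i = j then s j \<tau> else 0))
       + (\<Sum>j=1..N. (if j \<in> D i then (if i \<in> {1..n} then \<delta> i * s j \<tau> else 0) else 0))"
      unfolding sum.distrib[symmetric] by (intro sum.cong refl) (auto simp: C_def algebra_simps)
    also have "\<dots> = s i \<tau> + (\<Sum>j\<in>{1..N} \<inter> D i. (if i \<in> {1..n} then \<delta> i * s j \<tau> else 0))"
      using that sum.inter_restrict[of "{1..N}" "\<lambda>j. if i \<in> {1..n} then \<delta> i * s j \<tau> else 0" "D i"]
      by (simp add: sum.delta)
    also have "\<dots> = mu_tilde n D \<delta> \<omega> i \<tau>"
    proof (cases "i \<in> {1..n}")
      case True
      then have "{1..N} \<inter> D i = D i" using D_sub by auto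
      then show ?thesis using True by (simp add: mu_tilde_def s_def sum_distrib_left)
    next
      case False
      then show ?thesis by (simp only: mu_tilde_def if_not_P[OF False] if_False sum.neutral_const add_0_right s_def)
    qed
    finally show ?thesis by simp
  qed
  have Qs: "\<forall>i\<in>{1..N}. \<forall>j\<in>{1..N}. Q m i j = Q m j i" using Qsym m_in by auto
  have expand: "quad_cost N Q b p m (\<lambda>i. u i + a * v i) = J0 + a * (\<Sum>i=1..N. g i * v i)
      + a^2/2 * (\<Sum>i=1..N. \<Sum>j=1..N. v i * Q m i j * v j)" for v
  proof -
    have "quad_cost N Q b p m (\<lambda>i. u i + a * v i) = 1/2 * (\<Sum>i=1..N. \<Sum>j=1..N. (u i + a * v i) * Q m i j * (u j + a * v j))
       + (\<Sum>i=1..N. b m i * u i) + a * (\<Sum>i=1..N. b m i * v i) + p m"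
      by (simp add: quad_cost_def distrib_left sum.distrib sum_distrib_left mult_ac)
    also have "\<dots> = J0 + a * (\<Sum>i=1..N. g i * v i) + a^2/2 * (\<Sum>i=1..N. \<Sum>j=1..N. v i * Q m i j * v j)"
      unfolding quad_expand[OF Qs] J0_def quad_cost_def g_def
      by (simp add: algebra_simps sum.distrib sum_distrib_left)
    finally show ?thesis .
  qed
  have pt: "- (2 * k / a) * quad_cost N Q b p m (\<lambda>i. u i + a * mu_tilde n D \<delta> \<omega> i \<tau>) * sin (\<omega> m * \<tau>)
     = - (2 * k / a) * (J0 * s m \<tau> + a * (\<Sum>i=1..N. g i * (\<Sum>j=1..N. C i j * (s j \<tau> * s m \<tau>)))
        + a^2/2 * (\<Sum>i=1..N. \<Sum>j=1..N. Q m i j * (\<Sum>p=1..N. \<Sum>q=1..N. C i p * C j q * (s p \<tau> * s q \<tau> * s m \<tau>))))" for \<tau>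
  proof -
    have A: "(\<Sum>i=1..N. g i * mu_tilde n D \<delta> \<omega> i \<tau>) * s m \<tau> = (\<Sum>i=1..N. g i * (\<Sum>j=1..N. C i j * (s j \<tau> * s m \<tau>)))"
      by (simp add: sum_distrib_right sum_distrib_left mu mult_ac)
    have B: "(\<Sum>i=1..N. \<Sum>j=1..N. mu_tilde n D \<delta> \<omega> i \<tau> * Q m i j * mu_tilde n D \<delta> \<omega> j \<tau>) * s m \<tau>
       = (\<Sum>i=1..N. \<Sum>j=1..N. Q m i j * (\<Sum>p=1..N. \<Sum>q=1..N. C i p * C j q * (s p \<tau> * s q \<tau> * s m \<tau>)))"
      by (simp add: sum_distrib_right sum_distrib_left mu sum_product mult_ac)
    show ?thesis
      unfolding expand s_def[symmetric] using A B by (simp add: algebra_simps)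
  qed
  define V where "V = - (2 * k / a) * (J0 * 0 + a * (\<Sum>i=1..N. g i * (\<Sum>j=1..N. C i j * (if j = m then T/2 else 0)))
        + a^2/2 * (\<Sum>i=1..N. \<Sum>j=1..N. Q m i j * (\<Sum>p=1..N. \<Sum>q=1..N. C i p * C j q * 0)))"
  have HI: "((\<lambda>\<tau>. - (2 * k / a) * (J0 * s m \<tau> + a * (\<Sum>i=1..N. g i * (\<Sum>j=1..N. C i j * (s j \<tau> * s m \<tau>)))
        + a^2/2 * (\<Sum>i=1..N. \<Sum>j=1..N. Q m i j * (\<Sum>p=1..N. \<Sum>q=1..N. C i p * C j q * (s p \<tau> * s q \<tau> * s m \<tau>)))))
        has_integral V) {0..T}"
    unfolding V_def
    by (intro has_integral_mult_right has_integral_add has_integral_sum finite_atLeastAtMost I1 I2 I3; assumption)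
  have Vsimp: "V = -k * T * (\<Sum>i=1..N. g i * C i m)"
    using a_pos m_in unfolding V_def by (simp add: sum_distrib_left sum_distrib_right mult_ac if_distrib cong: if_cong)
  have int: "integral {0..T} (\<lambda>\<tau>. - (2 * k / a) * quad_cost N Q b p m (\<lambda>i. u i + a * mu_tilde n D \<delta> \<omega> i \<tau>) * sin (\<omega> m * \<tau>)) = V"
    unfolding pt using HI by (rule integral_unique)
  define S where "S = {j\<in>{1..n}. m \<in> D j}"
  have Cm: "C i m = (if i = m then 1 else 0) + (if i \<in> S then \<delta> i else 0)" for i
    unfolding C_def S_def by auto
  have SN: "{1..N} \<inter> S = S" using nN unfolding S_def by auto
  have L: "(\<Sum>i=1..N. g i * C i m) = g m + (\<Sum>i\<in>S. \<delta> i * g i)"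
  proof -
    have "(\<Sum>i=1..N. g i * C i m) = (\<Sum>i=1..N. (if i = m then g i else 0)) + (\<Sum>i=1..N. (if i \<in> S then \<delta> i * g i else 0))"
      unfolding sum.distrib[symmetric] by (intro sum.cong refl) (auto simp: Cm algebra_simps)
    also have "\<dots> = g m + (\<Sum>i\<in>S. \<delta> i * g i)"
      using m_in sum.inter_restrict[of "{1..N}" "\<lambda>i. \<delta> i * g i" S] SN by simp
    finally show ?thesis .
  qed
  have R: "(\<Sum>l=1..N. Q_delta n D \<delta> Q m l * u l) + B_delta n D \<delta> b m = g m + (\<Sum>i\<in>S. \<delta> i * g i)"
    unfolding Q_delta_def B_delta_def g_def S_def[symmetric]
    by (simp add: distrib_left distrib_right sum.distrib sum_distrib_left sum_distrib_right mult_ac sum.swap[of _ S])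
  show ?thesis
    unfolding int Vsimp L R using T_pos by simp
qed

end
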